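(* Let $G$ be a simple undirected graph on $\{1,\dots,n\}$ with adjacency $g_{ij}$ and degrees $d_i$. Let the exposure be binary, $e_i=I\big(\sum_jg_{ij}z_j>0\big)$, and suppose $Y_i(z_i,e_i)=\alpha_i+\beta_iz_i+\gamma_ie_i$. Under a completely randomized design with $n_t$ treated and $n_c=n-n_t\ge1$ control units ($n_t\ge1$), if $n_c<\min_id_i$ then the estimator $$\hat\beta_{naive}=\frac{\sum_i Y_i^{obs}Z_i}{\sum_i Z_i}-\frac{\sum_i Y_i^{obs}(1-Z_i)}{\sum_i(1-Z_i)}$$ is unbiased for $\mathrm{DTE}=\frac1n\sum_i\big(Y_i(1,0)-Y_i(0,0)\big)$, i.e. $\mathbb E[\hat\beta_{naive}]=\mathrm{DTE}$.
   Context: Completely randomized design: $\mathbf Z$ is uniform over vectors in $\{0,1\}^n$ with exactly $n_t$ ones. $E_i=I(\sum_jg_{ij}Z_j>0)$ and $Y_i^{obs}=Y_i(Z_i,E_i)$. *)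

theory Defs
  imports "HOL-Probability.Probability"
begin

text \<open>Units are 1..n. A treatment assignment is z :: nat => nat with values in {0,1}
  on 1..n and 0 outside. Adjacency is a boolean relation g; g_ij = of_bool (g i j).\<close>

definition simple_graph :: "nat \<Rightarrow> (nat \<Rightarrow> nat \<Rightarrow> bool) \<Rightarrow> bool" where
  "simple_graph n g \<longleftrightarrow> (\<forall>i\<in>{1..n}. \<forall>j\<in>{1..n}. g i j = g j i) \<and> (\<forall>i\<in>{1..n}. \<not> g i i)"

definition degree :: "nat \<Rightarrow> (nat \<Rightarrow> nat \<Rightarrow> bool) \<Rightarrow> nat \<Rightarrow> nat" where
  "degree n g i = card {j\<in>{1..n}. g i j}"

definition crd_support :: "nat \<Rightarrow> nat \<Rightarrow> (nat \<Rightarrow> nat) set" where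
  "crd_support n nt = {z. (\<forall>i\<in>{1..n}. z i \<in> {0,1}) \<and> (\<forall>i. i \<notin> {1..n} \<longrightarrow> z i = 0)
                         \<and> (\<Sum>i=1..n. z i) = nt}"

definition crd :: "nat \<Rightarrow> nat \<Rightarrow> (nat \<Rightarrow> nat) pmf" where
  "crd n nt = pmf_of_set (crd_support n nt)"

definition exposure :: "nat \<Rightarrow> (nat \<Rightarrow> nat \<Rightarrow> bool) \<Rightarrow> (nat \<Rightarrow> nat) \<Rightarrow> nat \<Rightarrow> nat" where
  "exposure n g z i = (if (\<Sum>j=1..n. of_bool (g i j) * z j) > (0::nat) then 1 else 0)"

definition Yobs :: "nat \<Rightarrow> (nat \<Rightarrow> nat \<Rightarrow> bool) \<Rightarrow> (nat \<Rightarrow> nat \<Rightarrow> nat \<Rightarrow> real) \<Rightarrow> (nat \<Rightarrow> nat) \<Rightarrow> nat \<Rightarrow> real" where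
  "Yobs n g Y z i = Y i (z i) (exposure n g z i)"

definition beta_naive :: "nat \<Rightarrow> (nat \<Rightarrow> nat \<Rightarrow> bool) \<Rightarrow> (nat \<Rightarrow> nat \<Rightarrow> nat \<Rightarrow> real) \<Rightarrow> (nat \<Rightarrow> nat) \<Rightarrow> real" where
  "beta_naive n g Y z =
     (\<Sum>i=1..n. Yobs n g Y z i * real (z i)) / (\<Sum>i=1..n. real (z i))
   - (\<Sum>i=1..n. Yobs n g Y z i * (1 - real (z i))) / (\<Sum>i=1..n. (1 - real (z i)))"

definition DTE :: "nat \<Rightarrow> (nat \<Rightarrow> nat \<Rightarrow> nat \<Rightarrow> real) \<Rightarrow> real" where
  "DTE n Y = (1 / real n) * (\<Sum>i=1..n. Y i 1 0 - Y i 0 0)"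

end

theory Submission
  imports Defs
begin

lemma crd_finite: "finite (crd_support n nt)"
proof -
  have "crd_support n nt \<subseteq> {f. \<forall>x. (x \<in> {1..n} \<longrightarrow> f x \<in> {0,1}) \<and> (x \<notin> {1..n} \<longrightarrow> f x = 0)}"
    unfolding crd_support_def by auto
  moreover have "finite {f. \<forall>x. (x \<in> {1..n} \<longrightarrow> f x \<in> ({0,1}::nat set)) \<and> (x \<notin> {1..n} \<longrightarrow> f x = 0)}"
    by (rule finite_set_of_finite_funs) auto
  ultimately show ?thesis by (rule finite_subset)
qed

lemma crd_nonempty:
  assumes "nt \<le> n"
  shows "crd_support n nt \<noteq> {}"
proof -
  define z where "z = (\<lambda>i::nat. if i \<in> {1..nt} then (1::nat) else 0)"
  have "(\<Sum>i=1..n. z i) = (\<Sum>i\<in>{1..n}. of_bool (i \<in> {1..nt}))"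
    unfolding z_def by (intro sum.cong) auto
  also have "\<dots> = card ({1..n} \<inter> {i. i \<in> {1..nt}})"
    by (simp only: sum_of_bool_eq[OF finite_atLeastAtMost finite_atLeastAtMost] of_nat_id)
  also have "{1..n} \<inter> {i. i \<in> {1..nt}} = {1..nt}" using assms by auto
  finally have "(\<Sum>i=1..n. z i) = nt" by simp
  moreover have "\<forall>i. i \<notin> {1..n} \<longrightarrow> z i = 0" using assms unfolding z_def by auto
  ultimately have "z \<in> crd_support n nt" unfolding crd_support_def z_def by auto
  then show ?thesis by auto
qed

lemma crd_sum_card:
  assumes "z \<in> crd_support n nt"
  shows "card {i\<in>{1..n}. z i = 1} = nt" and "card {i\<in>{1..n}. z i = 0} = n - nt"
proof -
  have zv: "\<And>i. i \<in> {1..n} \<Longrightarrow> z i \<in> {0,1}" and s: "(\<Sum>i=1..n. z i) = nt"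
    using assms unfolding crd_support_def by auto
  have "(\<Sum>i=1..n. z i) = (\<Sum>i\<in>{1..n}. of_bool (z i = 1))"
  proof (intro sum.cong refl)
    fix x assume "x \<in> {1..n}"
    then have "z x \<in> {0,1}" by (rule zv)
    then show "z x = of_bool (z x = 1)" by auto
  qed
  also have "\<dots> = card ({1..n} \<inter> {i. z i = 1})"
    by (simp only: sum_of_bool_eq[OF finite_atLeastAtMost finite_atLeastAtMost] of_nat_id)
  also have "{1..n} \<inter> {i. z i = 1} = {i\<in>{1..n}. z i = 1}" by blast
  finally show c1: "card {i\<in>{1..n}. z i = 1} = nt" using s by simp
  have "{1..n} = {i\<in>{1..n}. z i = 1} \<union> {i\<in>{1..n}. z i = 0}"
  proof (intro equalityI subsetI)
    fix x assume "x \<in> {1..n}"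
    then have "z x \<in> {0,1}" by (rule zv)
    with \<open>x \<in> {1..n}\<close> show "x \<in> {i\<in>{1..n}. z i = 1} \<union> {i\<in>{1..n}. z i = 0}" by auto
  qed auto
  moreover have "card ({i\<in>{1..n}. z i = 1} \<union> {i\<in>{1..n}. z i = 0}) = card {i\<in>{1..n}. z i = 1} + card {i\<in>{1..n}. z i = 0}"
    by (rule card_Un_disjoint) auto
  ultimately have "card {1..n} = card {i\<in>{1..n}. z i = 1} + card {i\<in>{1..n}. z i = 0}"
    by (simp only:)
  then show "card {i\<in>{1..n}. z i = 0} = n - nt" using c1 by simp
qed

lemma crd_swap_sum:
  assumes "i \<in> {1..n}" "j \<in> {1..n}"
  shows "(\<Sum>z\<in>crd_support n nt. real (z i)) = (\<Sum>z\<in>crd_support n nt. real (z j))"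
proof -
  define \<tau> where "\<tau> = (\<lambda>k::nat. if k = i then j else if k = j then i else k)"
  have tt: "\<tau> (\<tau> k) = k" for k unfolding \<tau>_def by auto
  have tin: "k \<in> {1..n} \<Longrightarrow> \<tau> k \<in> {1..n}" for k using assms unfolding \<tau>_def by auto
  have tin1: "Suc 0 \<le> k \<Longrightarrow> k \<le> n \<Longrightarrow> Suc 0 \<le> \<tau> k" for k using tin by auto
  have tin2: "Suc 0 \<le> k \<Longrightarrow> k \<le> n \<Longrightarrow> \<tau> k \<le> n" for k using tin by auto
  have tj: "\<tau> j = i" unfolding \<tau>_def by auto
  have tout: "k \<notin> {1..n} \<Longrightarrow> \<tau> k = k" for k using assms unfolding \<tau>_def by auto
  have mem: "z \<circ> \<tau> \<in> crd_support n nt" if "z \<in> crd_support n nt" for z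
  proof -
    have "(\<Sum>k=1..n. z (\<tau> k)) = (\<Sum>k=1..n. z k)"
      by (rule sum.reindex_bij_witness[where i=\<tau> and j=\<tau>]) (auto simp: tt intro: tin1 tin2)
    then show ?thesis using that tin tout unfolding crd_support_def by auto
  qed
  show ?thesis
    by (rule sum.reindex_bij_witness[where i="\<lambda>z. z \<circ> \<tau>" and j="\<lambda>z. z \<circ> \<tau>"])
       (auto simp: tt mem tj)
qed

lemma crd_marginal:
  assumes "i \<in> {1..n}"
  shows "(\<Sum>z\<in>crd_support n nt. real (z i)) = real (card (crd_support n nt)) * real nt / real n"
proof -
  let ?S = "crd_support n nt"
  have "(\<Sum>j=1..n. (\<Sum>z\<in>?S. real (z j))) = (\<Sum>j=1..n. (\<Sum>z\<in>?S. real (z i)))"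
    by (rule sum.cong[OF refl], rule crd_swap_sum) (use assms in auto)
  also have "\<dots> = real n * (\<Sum>z\<in>?S. real (z i))" by simp
  finally have 0: "(\<Sum>j=1..n. (\<Sum>z\<in>?S. real (z j))) = real n * (\<Sum>z\<in>?S. real (z i))" .
  have sw: "(\<Sum>j=1..n. (\<Sum>z\<in>?S. real (z j))) = (\<Sum>z\<in>?S. (\<Sum>j=1..n. real (z j)))"
    by (rule sum.swap)
  have 1: "real n * (\<Sum>z\<in>?S. real (z i)) = (\<Sum>z\<in>?S. (\<Sum>j=1..n. real (z j)))"
    using 0 sw by simp
  have "(\<Sum>z\<in>?S. (\<Sum>j=1..n. real (z j))) = (\<Sum>z\<in>?S. real nt)"
  proof (rule sum.cong[OF refl])
    fix z assume "z \<in> ?S"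
    then have "(\<Sum>j=1..n. z j) = nt" unfolding crd_support_def by auto
    then show "(\<Sum>j=1..n. real (z j)) = real nt" by (metis of_nat_sum)
  qed
  then have "real n * (\<Sum>z\<in>?S. real (z i)) = real (card ?S) * real nt" using 1 by simp
  moreover have "n > 0" using assms by auto
  ultimately show ?thesis
    by (simp add: eq_divide_eq mult.commute)
qed

lemma aux: fixes P Q t c :: real assumes "t>0" "c>0"
  shows "(P/t + Q/c)*t/(c+t) - Q/c = (P-Q)/(c+t)"
proof -
  have s: "c + t > 0" using assms by simp
  have "(P/t + Q/c)*t = (P*c + Q*t)/c" using assms by (simp add: field_simps)
  then have "(P/t + Q/c)*t/(c+t) - Q/c = (P*c + Q*t)/(c*(c+t)) - Q*(c+t)/(c*(c+t))"
    using assms s by simp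
  also have "\<dots> = (P*c + Q*t - Q*(c+t))/(c*(c+t))" by (simp add: diff_divide_distrib)
  also have "P*c + Q*t - Q*(c+t) = (P - Q) * c" by (simp add: algebra_simps)
  also have "(P - Q) * c /(c*(c+t)) = (P-Q)/(c+t)" using assms by simp
  finally show ?thesis .
qed

theorem proposition16:
  fixes n nt :: nat and g :: "nat \<Rightarrow> nat \<Rightarrow> bool"
    and Y :: "nat \<Rightarrow> nat \<Rightarrow> nat \<Rightarrow> real" and \<alpha> \<beta> \<gamma> :: "nat \<Rightarrow> real"
  assumes "simple_graph n g"
    and "\<And>i z e. i \<in> {1..n} \<Longrightarrow> z \<in> {0,1} \<Longrightarrow> e \<in> {0,1} \<Longrightarrow>
           Y i z e = \<alpha> i + \<beta> i * real z + \<gamma> i * real e"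
    and "nt \<ge> 1" and "nt < n"
    and "n - nt < Min (degree n g ` {1..n})"
  shows "measure_pmf.expectation (crd n nt) (beta_naive n g Y) = DTE n Y"
proof -
  let ?S = "crd_support n nt"
  define nc where "nc = real n - real nt"
  have ncpos: "nc > 0" using assms(4) unfolding nc_def by simp
  have ntpos: "real nt > 0" using assms(3) by simp
  have npos: "real n > 0" using assms(4) by simp
  have fin: "finite ?S" by (rule crd_finite)
  have ne: "?S \<noteq> {}" using assms(4) by (intro crd_nonempty) simp
  have cpos: "real (card ?S) > 0" using fin ne by (simp add: card_gt_0_iff)
  define a where "a = (\<lambda>i. (\<alpha> i + \<beta> i + \<gamma> i) / real nt + (\<alpha> i + \<gamma> i) / nc)"
  define b where "b = - (\<Sum>i=1..n. \<alpha> i + \<gamma> i) / nc"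
  have expo: "exposure n g z i = 1" if z: "z \<in> ?S" and i: "i \<in> {1..n}" for z i
  proof (rule ccontr)
    assume "exposure n g z i \<noteq> 1"
    then have "(\<Sum>j=1..n. of_bool (g i j) * z j) = 0" unfolding exposure_def
      by (auto split: if_splits)
    then have "\<forall>j\<in>{1..n}. of_bool (g i j) * z j = 0" by simp
    then have "{j\<in>{1..n}. g i j} \<subseteq> {j\<in>{1..n}. z j = 0}" by auto
    then have "degree n g i \<le> card {j\<in>{1..n}. z j = 0}" unfolding degree_def
      by (intro card_mono) auto
    also have "\<dots> = n - nt" using crd_sum_card(2)[OF z] .
    finally have "degree n g i \<le> n - nt" .
    moreover have "Min (degree n g ` {1..n}) \<le> degree n g i" using i by (intro Min_le) auto
    ultimately show False using assms(5) by simp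
  qed
  have bn: "beta_naive n g Y z = (\<Sum>i=1..n. a i * real (z i)) + b" if z: "z \<in> ?S" for z
  proof -
    have zv: "\<And>i. i \<in> {1..n} \<Longrightarrow> z i \<in> {0,1}" and s: "(\<Sum>i=1..n. z i) = nt"
      using z unfolding crd_support_def by auto
    have Yo: "Yobs n g Y z i = \<alpha> i + \<beta> i * real (z i) + \<gamma> i" if "i \<in> {1..n}" for i
      using assms(2)[of i "z i" 1] zv[OF that] expo[OF z that] that unfolding Yobs_def by simp
    have d1: "(\<Sum>i=1..n. real (z i)) = real nt" using s by (simp flip: of_nat_sum)
    have d2: "(\<Sum>i=1..n. (1 - real (z i))) = nc" unfolding nc_def
      using d1 by (simp add: sum_subtractf)
    have n1: "(\<Sum>i=1..n. Yobs n g Y z i * real (z i)) = (\<Sum>i=1..n. (\<alpha> i + \<beta> i + \<gamma> i) * real (z i))"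
      using Yo zv by (intro sum.cong) (auto simp: algebra_simps)
    have n2: "(\<Sum>i=1..n. Yobs n g Y z i * (1 - real (z i))) =
              (\<Sum>i=1..n. \<alpha> i + \<gamma> i) - (\<Sum>i=1..n. (\<alpha> i + \<gamma> i) * real (z i))"
    proof -
      have "(\<Sum>i=1..n. Yobs n g Y z i * (1 - real (z i))) = (\<Sum>i=1..n. (\<alpha> i + \<gamma> i) - (\<alpha> i + \<gamma> i) * real (z i))"
        using Yo zv by (intro sum.cong) (auto simp: algebra_simps)
      then show ?thesis by (simp add: sum_subtractf)
    qed
    have "(\<Sum>i=1..n. a i * real (z i)) = (\<Sum>i=1..n. (\<alpha> i + \<beta> i + \<gamma> i) * real (z i)) / real nt
         + (\<Sum>i=1..n. (\<alpha> i + \<gamma> i) * real (z i)) / nc"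
    proof -
      have "(\<Sum>i=1..n. a i * real (z i)) = (\<Sum>i=1..n. (\<alpha> i + \<beta> i + \<gamma> i) * real (z i) / real nt
         + (\<alpha> i + \<gamma> i) * real (z i) / nc)"
        unfolding a_def by (intro sum.cong refl) (simp add: distrib_right)
      then show ?thesis by (simp only: sum.distrib sum_divide_distrib)
    qed
    then show ?thesis unfolding beta_naive_def n1 n2 d1 d2 b_def
      by (simp add: diff_divide_distrib)
  qed
  have "measure_pmf.expectation (crd n nt) (beta_naive n g Y) = (\<Sum>z\<in>?S. beta_naive n g Y z) / real (card ?S)"
    unfolding crd_def using fin ne by (simp add: integral_pmf_of_set)
  also have "(\<Sum>z\<in>?S. beta_naive n g Y z) = (\<Sum>z\<in>?S. (\<Sum>i=1..n. a i * real (z i)) + b)"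
    using bn by (intro sum.cong) auto
  also have "\<dots> = (\<Sum>i=1..n. a i * (\<Sum>z\<in>?S. real (z i))) + real (card ?S) * b"
    by (simp add: sum.distrib sum_distrib_left sum.swap[of _ ?S])
  also have "\<dots> = (\<Sum>i=1..n. a i * (real (card ?S) * real nt / real n)) + real (card ?S) * b"
    by (intro arg_cong2[where f="(+)"] sum.cong refl) (simp add: crd_marginal)
  also have "(\<Sum>i=1..n. a i * (real (card ?S) * real nt / real n)) = (\<Sum>i=1..n. a i) * (real (card ?S) * real nt / real n)"
    by (rule sum_distrib_right[symmetric])
  finally have E0: "measure_pmf.expectation (crd n nt) (beta_naive n g Y) =
      ((\<Sum>i=1..n. a i) * (real (card ?S) * real nt / real n) + real (card ?S) * b) / real (card ?S)" .
  have E: "measure_pmf.expectation (crd n nt) (beta_naive n g Y) =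
      (\<Sum>i=1..n. a i) * real nt / real n + b"
    unfolding E0 using cpos npos by (simp add: field_simps)
  define P where "P = (\<Sum>i=1..n. \<alpha> i + \<beta> i + \<gamma> i)"
  define Q where "Q = (\<Sum>i=1..n. \<alpha> i + \<gamma> i)"
  define B where "B = (\<Sum>i=1..n. \<beta> i)"
  have PQB: "P = Q + B" unfolding P_def Q_def B_def by (simp add: sum.distrib)
  have sa: "(\<Sum>i=1..n. a i) = P / real nt + Q / nc"
    unfolding a_def P_def Q_def sum_divide_distrib by (rule sum.distrib)
  have bb: "b = - Q / nc" unfolding b_def Q_def ..
  have "(\<Sum>i=1..n. a i) * real nt / real n + b = (P / real nt + Q / nc) * real nt / real n - Q / nc"
    unfolding sa bb by simp
  also have "\<dots> = B / real n"
  proof -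
    have hn: "real n = nc + real nt" unfolding nc_def by simp
    have "nc + real nt > 0" using ncpos ntpos by simp
    show ?thesis
    proof -
      have "(P / real nt + Q / nc) * real nt / (nc + real nt) - Q / nc = (P - Q) / (nc + real nt)"
        by (rule aux[OF ntpos ncpos])
      then show ?thesis unfolding hn PQB by simp
    qed
  qed
  also have "\<dots> = DTE n Y" unfolding DTE_def
  proof -
    have "(\<Sum>i=1..n. \<beta> i) = (\<Sum>i=1..n. Y i 1 0 - Y i 0 0)"
    proof (rule sum.cong[OF refl])
      fix i assume i: "i \<in> {1..n}"
      show "\<beta> i = Y i 1 0 - Y i 0 0"
        using assms(2)[OF i, of 1 0] assms(2)[OF i, of 0 0] by simp
    qed
    then show "B / real n = 1 / real n * (\<Sum>i=1..n. Y i 1 0 - Y i 0 0)" unfolding B_def by simp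
  qed
  finally show ?thesis using E by simp
qed

end
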